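(* Let $q=p^k$ for a prime $p \neq 3$, and let $G=\mathrm{PSL}(2,q)$ be considered as a permutation group in its transitive action on the left cosets of a subgroup isomorphic to $\mathbb{Z}_3$. Then a non-canonical basic intersecting set in $G$ contains no point stabilizer as a proper subset.
   Context: For a permutation group $G$ on a finite set $V$, a subset $\mathcal{F}\subseteq G$ is intersecting if for all $g,h\in\mathcal{F}$ there is $v\in V$ with $g(v)=h(v)$. A canonical intersecting set is a coset $gG_v$ of a point stabilizer ($g\in G$, $v\in V$). A basic intersecting set is an intersecting set containing the identity. *)

theory Defs
  imports "HOL-Analysis.Analysis" "HOL-Algebra.Left_Coset" "HOL-Library.Numeral_Type"
begin

definition SL2 :: "('a::field ^ 2 ^ 2) monoid" where
  "SL2 = \<lparr>carrier = {A. det A = 1}, mult = (**), one = mat 1\<rparr>"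

definition PSL2 :: "('a::field ^ 2 ^ 2) set monoid" where
  "PSL2 = SL2 Mod {mat 1, - mat 1}"

definition coset_stab :: "('g, 'b) monoid_scheme \<Rightarrow> 'g set \<Rightarrow> 'g set" where
  "coset_stab G v = {g \<in> carrier G. g <#\<^bsub>G\<^esub> v = v}"

definition intersecting_set :: "('g, 'b) monoid_scheme \<Rightarrow> 'g set \<Rightarrow> 'g set \<Rightarrow> bool" where
  "intersecting_set G H F \<longleftrightarrow> F \<subseteq> carrier G \<and>
     (\<forall>g\<in>F. \<forall>h\<in>F. \<exists>v \<in> lcosets\<^bsub>G\<^esub> H. g <#\<^bsub>G\<^esub> v = h <#\<^bsub>G\<^esub> v)"

definition canonical_intersecting_set :: "('g, 'b) monoid_scheme \<Rightarrow> 'g set \<Rightarrow> 'g set \<Rightarrow> bool" where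
  "canonical_intersecting_set G H F \<longleftrightarrow>
     (\<exists>g\<in>carrier G. \<exists>v \<in> lcosets\<^bsub>G\<^esub> H. F = g <#\<^bsub>G\<^esub> coset_stab G v)"

definition basic_intersecting_set :: "('g, 'b) monoid_scheme \<Rightarrow> 'g set \<Rightarrow> 'g set \<Rightarrow> bool" where
  "basic_intersecting_set G H F \<longleftrightarrow> intersecting_set G H F \<and> \<one>\<^bsub>G\<^esub> \<in> F"

end

theory Submission imports Defs "HOL-Computational_Algebra.Primes" "HOL-Algebra.Multiplicative_Group" begin
abbreviation NN :: "('a::field ^ 2 ^ 2) set" where "NN \<equiv> {mat 1, - mat 1}"

lemma carrier_SL2[simp]: "carrier SL2 = {A. det A = 1}" and mult_SL2[simp]: "mult SL2 = (**)"
  and one_SL2[simp]: "one SL2 = mat 1"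
  by (simp_all add: SL2_def)

lemma group_SL2: "group (SL2 :: ('a::field ^ 2 ^ 2) monoid)"
proof (rule groupI)
  fix x :: "'a^2^2" assume x: "x \<in> carrier SL2"
  then have "invertible x" by (simp add: invertible_det_nz)
  then obtain y where 1: "y ** x = mat 1" by (auto simp: invertible_def)
  then have "det y * det x = 1" by (metis det_I det_mul)
  with x have "det y = 1" by simp
  with 1 show "\<exists>y\<in>carrier SL2. y \<otimes>\<^bsub>SL2\<^esub> x = \<one>\<^bsub>SL2\<^esub>" by auto
qed (auto simp: det_mul matrix_mul_assoc)

lemma negI_comm: "(x::'a::field^2^2) ** (- mat 1) = (- mat 1) ** x"
  by (simp add: vec_eq_iff forall_2 matrix_matrix_mult_def sum_2 mat_def)

lemma negI_sq: "(- mat 1 :: 'a::field^2^2) ** (- mat 1) = mat 1"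
  by (simp add: vec_eq_iff forall_2 matrix_matrix_mult_def sum_2 mat_def)

lemma det_negI: "det (- mat 1 :: 'a::field^2^2) = 1"
  by (simp add: det_2 mat_def)

lemma normal_NN: "NN \<lhd> (SL2 :: ('a::field ^ 2 ^ 2) monoid)"
proof -
  interpret G: group "SL2 :: ('a::field ^ 2 ^ 2) monoid" by (rule group_SL2)
  have inv: "inv\<^bsub>SL2\<^esub> (- mat 1) = (- mat 1 :: 'a^2^2)"
    by (rule G.inv_equality) (auto simp: negI_sq det_negI)
  have sg: "subgroup (NN :: ('a::field ^ 2 ^ 2) set) SL2"
    by (rule G.subgroupI) (auto simp: det_negI negI_sq inv G.inv_one[simplified])
  show ?thesis unfolding G.normal_inv_iff
  proof (intro conjI sg ballI)
    fix x h :: "'a^2^2" assume x: "x \<in> carrier (SL2 :: ('a::field ^ 2 ^ 2) monoid)" and h: "h \<in> NN"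
    have "x ** inv\<^bsub>SL2\<^esub> x = mat 1" using G.r_inv[OF x] by simp
    moreover have "x ** (- mat 1) ** inv\<^bsub>SL2\<^esub> x = (- mat 1) ** (x ** inv\<^bsub>SL2\<^esub> x)"
      by (simp add: negI_comm matrix_mul_assoc)
    ultimately show "x \<otimes>\<^bsub>SL2\<^esub> h \<otimes>\<^bsub>SL2\<^esub> inv\<^bsub>SL2\<^esub> x \<in> NN"
      using h by auto
  qed
qed

definition tr2 :: "'a::field^2^2 \<Rightarrow> 'a" where "tr2 A = A$1$1 + A$2$2"

lemma mm: "((A::'a::field^2^2) ** B)$i$j = A$i$1 * B$1$j + A$i$2 * B$2$j"
  by (simp add: matrix_matrix_mult_def sum_2)

lemma cube_tr:
  fixes A :: "'a::field^2^2"
  assumes det: "det A = 1" and cube: "A ** A ** A \<in> NN" and nt: "A \<notin> NN"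
  shows "tr2 A ^ 2 = 1"
proof (rule ccontr)
  assume ne: "tr2 A ^ 2 \<noteq> 1"
  define a b c d where "a = A$1$1" "b = A$1$2" "c = A$2$1" "d = A$2$2"
  have dt: "a*d - b*c = 1" using det by (simp add: det_2 a_b_c_d_def)
  have t: "tr2 A = a + d" by (simp add: tr2_def a_b_c_d_def)
  have c11: "(A**A**A)$1$1 = ((a+d)^2-1)*a - (a+d)"
    using dt unfolding mm a_b_c_d_def by Groebner_Basis.algebra
  have c22: "(A**A**A)$2$2 = ((a+d)^2-1)*d - (a+d)"
    using dt unfolding mm a_b_c_d_def by Groebner_Basis.algebra
  have c12: "(A**A**A)$1$2 = ((a+d)^2-1)*b"
    using dt unfolding mm a_b_c_d_def by Groebner_Basis.algebra
  have c21: "(A**A**A)$2$1 = ((a+d)^2-1)*c"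
    using dt unfolding mm a_b_c_d_def by Groebner_Basis.algebra
  obtain e :: 'a where e: "e = 1 \<or> e = -1" and e11: "(A**A**A)$1$1 = e" and e22: "(A**A**A)$2$2 = e"
    and e12: "(A**A**A)$1$2 = 0" and e21: "(A**A**A)$2$1 = 0"
    using cube by (auto simp: mat_def)
  have nz: "(a+d)^2 - 1 \<noteq> 0" using ne t by simp
  have b0: "b = 0" using c12 e12 nz by simp
  have c0: "c = 0" using c21 e21 nz by simp
  have "((a+d)^2-1)*a = ((a+d)^2-1)*d" using c11 c22 e11 e22 by simp
  then have ad: "a = d" using nz by simp
  have "a * a = 1" using dt b0 ad by simp
  then have "a = 1 \<or> a = -1" by (metis square_eq_1_iff)
  then have "A \<in> NN"
    using ad b0 c0 by (auto simp: vec_eq_iff forall_2 mat_def a_b_c_d_def)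
  with nt show False by simp
qed

lemma tr_rel:
  fixes W X :: "'a::field^2^2"
  assumes "det W = 1"
  shows "tr2 (W ** W ** X) = tr2 W * tr2 (W ** X) - tr2 X"
  using assms unfolding tr2_def mm det_2 by Groebner_Basis.algebra

lemma final_alg:
  fixes t a b :: "'a::field"
  assumes "t^2 = 1" "a^2 = 1" "b^2 = 1" "(t*b - a)^2 = 1"
  shows "(3::'a) = 0"
proof -
  have "(t*b - a)^2 = t^2*b^2 - 2*(t*a*b) + a^2" by (simp add: power2_eq_square algebra_simps)
  then have h: "2*(t*a*b) = 1" using assms by simp
  have "(2*(t*a*b))^2 = 4 * (t^2*a^2*b^2)" by (simp add: power2_eq_square algebra_simps)
  then have e: "(1::'a) = 4" using h assms by simp
  have "(3::'a) = 4 - 1" by simp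
  also have "\<dots> = 0" using e by simp
  finally show ?thesis .
qed

lemma three_nz:
  assumes "prime p" "p \<noteq> 3" "CARD('a::{field,finite}) = p ^ k"
  shows "(3::'a) \<noteq> 0"
proof
  assume 3: "(3::'a) = 0"
  have "sum (\<lambda>x::'a. x + 1) UNIV = sum (\<lambda>x. x) UNIV"
  proof (rule sum.reindex_bij_witness[of _ "\<lambda>x. x - 1" "\<lambda>x. x + 1"]) qed auto
  then have "of_nat CARD('a) = (0::'a)" by (simp add: sum.distrib)
  then have d1: "CHAR('a) dvd p ^ k" using assms(3) of_nat_eq_0_iff_char_dvd by metis
  have "of_nat 3 = (0::'a)" using 3 by simp
  then have "CHAR('a) dvd 3" by (simp only: of_nat_eq_0_iff_char_dvd)
  moreover have "CHAR('a) \<noteq> 1" by simp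
  moreover have "prime (3::nat)" by simp
  ultimately have "CHAR('a) = 3" by (metis prime_nat_iff)
  with d1 have "3 dvd p" using \<open>prime (3::nat)\<close> prime_dvd_power by metis
  then show False using assms by (metis primes_dvd_imp_eq \<open>prime (3::nat)\<close>)
qed


lemma mat_contra:
  fixes W X :: "'a::field^2^2"
  assumes three: "(3::'a) \<noteq> 0" and dW: "det W = 1" and dX: "det X = 1"
    and W: "W \<notin> NN" "W ** W ** W \<in> NN"
    and X: "X \<notin> NN" "X ** X ** X \<in> NN"
    and WX: "W ** X \<notin> NN" "(W ** X) ** (W ** X) ** (W ** X) \<in> NN"
    and WWX: "W ** W ** X \<notin> NN" "(W ** W ** X) ** (W ** W ** X) ** (W ** W ** X) \<in> NN"
  shows False
proof -
  have d1: "det (W ** X) = 1" using dW dX by (simp add: det_mul)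
  have d2: "det (W ** W ** X) = 1" using dW dX by (simp add: det_mul)
  have t1: "tr2 W ^ 2 = 1" using cube_tr[OF dW W(2) W(1)] .
  have t2: "tr2 X ^ 2 = 1" using cube_tr[OF dX X(2) X(1)] .
  have t3: "tr2 (W ** X) ^ 2 = 1" using cube_tr[OF d1 WX(2) WX(1)] .
  have t4: "tr2 (W ** W ** X) ^ 2 = 1" using cube_tr[OF d2 WWX(2) WWX(1)] .
  have "(tr2 W * tr2 (W ** X) - tr2 X) ^ 2 = 1" using t4 tr_rel[OF dW] by simp
  then have "(3::'a) = 0" using final_alg[OF t1 t2 t3] by simp
  with three show False by simp
qed

lemma (in monoid) pow3: "x \<in> carrier G \<Longrightarrow> x [^] (3::nat) = x \<otimes> x \<otimes> x"
  by (simp add: numeral_3_eq_3)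

lemma (in group) fix_cube:
  assumes H: "subgroup H G" and cH: "card H = 3" and g: "g \<in> carrier G"
    and v: "v \<in> lcosets H" and gv: "g <# v = v"
  shows "g \<otimes> g \<otimes> g = \<one>"
proof -
  obtain x where x: "x \<in> carrier G" and vx: "v = x <# H" using v unfolding LCOSETS_def by auto
  have Hc: "H \<subseteq> carrier G" using H subgroup.subset by blast
  have "g <# v = (g \<otimes> x) <# H" using vx lcos_m_assoc[OF Hc g x] by simp
  moreover have "g \<otimes> x \<in> (g \<otimes> x) <# H" using lcos_self[OF _ H] g x by simp
  ultimately have "g \<otimes> x \<in> x <# H" using gv vx by simp
  then obtain k where k: "k \<in> H" and gxk: "g \<otimes> x = x \<otimes> k" unfolding l_coset_def by auto
  have kc: "k \<in> carrier G" using k Hc by auto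
  interpret Hg: group "G\<lparr>carrier := H\<rparr>" using subgroup.subgroup_is_group[OF H is_group] .
  have "k [^]\<^bsub>G\<lparr>carrier := H\<rparr>\<^esub> order (G\<lparr>carrier := H\<rparr>) = \<one>\<^bsub>G\<lparr>carrier := H\<rparr>\<^esub>"
    using Hg.pow_order_eq_1 k by simp
  then have "k [^]\<^bsub>G\<lparr>carrier := H\<rparr>\<^esub> (3::nat) = \<one>" using cH by (simp add: order_def)
  then have "k [^] (3::nat) = \<one>" using nat_pow_consistent[of k 3 H] by simp
  then have k3: "k \<otimes> k \<otimes> k = \<one>" using pow3 kc by simp
  have gdef: "g = x \<otimes> k \<otimes> inv x"
    using gxk g x kc by (metis inv_solve_right m_closed inv_closed)
  have canc: "\<And>y. y \<in> carrier G \<Longrightarrow> inv x \<otimes> (x \<otimes> y) = y"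
    using x by (simp add: m_assoc[symmetric])
  have "g \<otimes> g \<otimes> g = x \<otimes> (k \<otimes> k \<otimes> k) \<otimes> inv x"
    unfolding gdef using x kc by (simp add: m_assoc canc)
  also have "\<dots> = \<one>" using k3 x by simp
  finally show ?thesis .
qed

lemma group_PSL2: "group (PSL2 :: ('a::field^2^2) set monoid)"
  unfolding PSL2_def by (rule normal.factorgroup_is_group[OF normal_NN])

lemma carrier_PSL2: "carrier (PSL2 :: ('a::field^2^2) set monoid) = (\<lambda>A. NN #>\<^bsub>SL2\<^esub> A) ` {A. det A = 1}"
  unfolding PSL2_def carrier_FactGroup by simp

lemma mult_PSL2:
  fixes A B :: "'a::field^2^2"
  assumes "det A = 1" "det B = 1"
  shows "(NN #>\<^bsub>SL2\<^esub> A) \<otimes>\<^bsub>PSL2\<^esub> (NN #>\<^bsub>SL2\<^esub> B) = NN #>\<^bsub>SL2\<^esub> (A ** B)"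
  unfolding PSL2_def using normal.rcos_sum[OF normal_NN, of A B] assms by simp

lemma one_PSL2: "\<one>\<^bsub>PSL2\<^esub> = (NN :: ('a::field^2^2) set)"
  unfolding PSL2_def by simp

lemma rcos_one_iff:
  fixes A :: "'a::field^2^2"
  assumes "det A = 1"
  shows "NN #>\<^bsub>SL2\<^esub> A = NN \<longleftrightarrow> A \<in> NN"
proof -
  interpret G: group "SL2 :: ('a::field ^ 2 ^ 2) monoid" by (rule group_SL2)
  have sg: "subgroup (NN :: ('a::field ^ 2 ^ 2) set) SL2"
    using normal_NN normal_imp_subgroup by blast
  show ?thesis
  proof
    assume "NN #>\<^bsub>SL2\<^esub> A = NN"
    moreover have "A \<in> NN #>\<^bsub>SL2\<^esub> A" using G.rcos_self[OF _ sg] assms by simp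
    ultimately show "A \<in> NN" by simp
  qed (use subgroup.rcos_const[OF sg group_SL2] in blast)
qed

lemma psl_lift:
  fixes A :: "'a::field^2^2"
  assumes A: "det A = 1" and z: "z = NN #>\<^bsub>SL2\<^esub> A"
    and c: "z \<otimes>\<^bsub>PSL2\<^esub> z \<otimes>\<^bsub>PSL2\<^esub> z = \<one>\<^bsub>PSL2\<^esub>" and n: "z \<noteq> \<one>\<^bsub>PSL2\<^esub>"
  shows "A \<notin> NN" "A ** A ** A \<in> NN"
proof -
  show "A \<notin> NN" using n z rcos_one_iff[OF A] one_PSL2 by metis
  have "z \<otimes>\<^bsub>PSL2\<^esub> z \<otimes>\<^bsub>PSL2\<^esub> z = NN #>\<^bsub>SL2\<^esub> (A ** A ** A)"
    using z A by (simp add: mult_PSL2 det_mul)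
  then show "A ** A ** A \<in> NN"
    using c rcos_one_iff[of "A ** A ** A"] A by (simp add: one_PSL2 det_mul)
qed

theorem proposition2p13:
  fixes H :: "('a::{field,finite} ^ 2 ^ 2) set set"
    and F :: "('a ^ 2 ^ 2) set set"
    and p k :: nat
  assumes "prime p" and "p \<noteq> 3" and "k \<ge> 1"
    and "CARD('a) = p ^ k"
    and "subgroup H PSL2" and "card H = 3"
    and "basic_intersecting_set PSL2 H F"
    and "\<not> canonical_intersecting_set PSL2 H F"
  shows "\<not> (\<exists>v \<in> lcosets\<^bsub>PSL2\<^esub> H. coset_stab PSL2 v \<subset> F)"
proof
  assume "\<exists>v \<in> lcosets\<^bsub>PSL2\<^esub> H. coset_stab PSL2 v \<subset> F"
  then obtain v where v: "v \<in> lcosets\<^bsub>PSL2\<^esub> H" and SF: "coset_stab PSL2 v \<subset> F" by blast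
  interpret P: group "PSL2 :: ('a^2^2) set monoid" by (rule group_PSL2)
  have sH: "subgroup H PSL2" and cH: "card H = 3" using assms by auto
  have Hc: "H \<subseteq> carrier PSL2" using sH subgroup.subset by blast
  have Fc: "F \<subseteq> carrier PSL2" and one: "\<one>\<^bsub>PSL2\<^esub> \<in> F"
    and inter: "\<forall>g\<in>F. \<forall>h\<in>F. \<exists>w \<in> lcosets\<^bsub>PSL2\<^esub> H. g <#\<^bsub>PSL2\<^esub> w = h <#\<^bsub>PSL2\<^esub> w"
    using assms(7) unfolding basic_intersecting_set_def intersecting_set_def by auto
  obtain x where x: "x \<in> carrier PSL2" and vx: "v = x <#\<^bsub>PSL2\<^esub> H"
    using v unfolding LCOSETS_def by auto
  have vc: "v \<subseteq> carrier PSL2" using vx x Hc unfolding l_coset_def by auto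
  define S where "S = coset_stab PSL2 v"
  have S_iff: "\<And>g. g \<in> S \<longleftrightarrow> g \<in> carrier PSL2 \<and> g <#\<^bsub>PSL2\<^esub> v = v"
    unfolding S_def coset_stab_def by auto
  have S1: "\<one>\<^bsub>PSL2\<^esub> \<in> S" using S_iff P.lcos_mult_one[OF vc] by simp
  have Smult: "g \<otimes>\<^bsub>PSL2\<^esub> g' \<in> S" if "g \<in> S" "g' \<in> S" for g g'
    using that S_iff P.lcos_m_assoc[OF vc, of g g'] by auto
  have Sinv: "inv\<^bsub>PSL2\<^esub> g \<in> S" if "g \<in> S" for g
  proof -
    have g: "g \<in> carrier PSL2" "g <#\<^bsub>PSL2\<^esub> v = v" using that S_iff by auto
    have "inv\<^bsub>PSL2\<^esub> g <#\<^bsub>PSL2\<^esub> v = inv\<^bsub>PSL2\<^esub> g <#\<^bsub>PSL2\<^esub> (g <#\<^bsub>PSL2\<^esub> v)" using g by simp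
    also have "\<dots> = v" using P.lcos_m_assoc[OF vc, of "inv\<^bsub>PSL2\<^esub> g" g] g P.lcos_mult_one[OF vc] by simp
    finally show ?thesis using g S_iff by simp
  qed
  have SsubF: "S \<subseteq> F" and nS: "\<exists>f\<in>F. f \<notin> S" using SF unfolding S_def by auto
  then obtain f where fF: "f \<in> F" and fS: "f \<notin> S" by blast
  have fc: "f \<in> carrier PSL2" using fF Fc by auto
  have "\<not> H \<subseteq> {\<one>\<^bsub>PSL2\<^esub>}"
  proof
    assume "H \<subseteq> {\<one>\<^bsub>PSL2\<^esub>}"
    then have "card H \<le> 1" using card_mono[of "{\<one>\<^bsub>PSL2\<^esub>}" H] by simp
    with cH show False by simp
  qed
  then obtain h where hH: "h \<in> H" and h1: "h \<noteq> \<one>\<^bsub>PSL2\<^esub>" by blast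
  have hc: "h \<in> carrier PSL2" using hH Hc by auto
  define u where "u = x \<otimes>\<^bsub>PSL2\<^esub> h \<otimes>\<^bsub>PSL2\<^esub> inv\<^bsub>PSL2\<^esub> x"
  have uc: "u \<in> carrier PSL2" unfolding u_def using x hc by simp
  have ux: "u \<otimes>\<^bsub>PSL2\<^esub> x = x \<otimes>\<^bsub>PSL2\<^esub> h" unfolding u_def using x hc by (simp add: P.m_assoc)
  have "u <#\<^bsub>PSL2\<^esub> v = (x \<otimes>\<^bsub>PSL2\<^esub> h) <#\<^bsub>PSL2\<^esub> H"
    using vx P.lcos_m_assoc[OF Hc uc x] ux by simp
  also have "\<dots> = x <#\<^bsub>PSL2\<^esub> (h <#\<^bsub>PSL2\<^esub> H)" using P.lcos_m_assoc[OF Hc x hc] by simp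
  also have "\<dots> = v" using P.coset_join3[OF hc sH hH] vx by simp
  finally have uS: "u \<in> S" using S_iff uc by simp
  have u1: "u \<noteq> \<one>\<^bsub>PSL2\<^esub>"
  proof
    assume "u = \<one>\<^bsub>PSL2\<^esub>"
    then have "x \<otimes>\<^bsub>PSL2\<^esub> h = x" using ux x by simp
    then have "h = \<one>\<^bsub>PSL2\<^esub>" using x hc by simp
    with h1 show False by simp
  qed
  have fixc: "g \<otimes>\<^bsub>PSL2\<^esub> g \<otimes>\<^bsub>PSL2\<^esub> g = \<one>\<^bsub>PSL2\<^esub>"
    if "g \<in> carrier PSL2" "w \<in> lcosets\<^bsub>PSL2\<^esub> H" "g <#\<^bsub>PSL2\<^esub> w = w" for g w
    using P.fix_cube[OF sH cH that] .
  have pairc: "(inv\<^bsub>PSL2\<^esub> g' \<otimes>\<^bsub>PSL2\<^esub> g) \<otimes>\<^bsub>PSL2\<^esub> (inv\<^bsub>PSL2\<^esub> g' \<otimes>\<^bsub>PSL2\<^esub> g) \<otimes>\<^bsub>PSL2\<^esub> (inv\<^bsub>PSL2\<^esub> g' \<otimes>\<^bsub>PSL2\<^esub> g) = \<one>\<^bsub>PSL2\<^esub>"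
    if gF: "g \<in> F" and g'F: "g' \<in> F" for g g'
  proof -
    obtain w where w: "w \<in> lcosets\<^bsub>PSL2\<^esub> H" and gw: "g <#\<^bsub>PSL2\<^esub> w = g' <#\<^bsub>PSL2\<^esub> w"
      using bspec[OF bspec[OF inter gF] g'F] by blast
    obtain y where y: "y \<in> carrier PSL2" and wy: "w = y <#\<^bsub>PSL2\<^esub> H"
      using w unfolding LCOSETS_def by auto
    have wc: "w \<subseteq> carrier PSL2" using wy y Hc unfolding l_coset_def by auto
    have gc: "g \<in> carrier PSL2" "g' \<in> carrier PSL2" using gF g'F Fc by auto
    have "(inv\<^bsub>PSL2\<^esub> g' \<otimes>\<^bsub>PSL2\<^esub> g) <#\<^bsub>PSL2\<^esub> w = inv\<^bsub>PSL2\<^esub> g' <#\<^bsub>PSL2\<^esub> (g <#\<^bsub>PSL2\<^esub> w)"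
      using P.lcos_m_assoc[OF wc, of "inv\<^bsub>PSL2\<^esub> g'" g] gc by simp
    also have "\<dots> = w" using gw P.lcos_m_assoc[OF wc, of "inv\<^bsub>PSL2\<^esub> g'" g'] gc P.lcos_mult_one[OF wc] by simp
    finally show ?thesis using fixc[OF P.m_closed[OF P.inv_closed[OF gc(2)] gc(1)] w] by simp
  qed
  have c_f: "f \<otimes>\<^bsub>PSL2\<^esub> f \<otimes>\<^bsub>PSL2\<^esub> f = \<one>\<^bsub>PSL2\<^esub>" using pairc[OF fF one] fc by simp
  have iuF: "inv\<^bsub>PSL2\<^esub> u \<in> F" using Sinv[OF uS] SsubF by auto
  have iuuF: "inv\<^bsub>PSL2\<^esub> (u \<otimes>\<^bsub>PSL2\<^esub> u) \<in> F" using Sinv[OF Smult[OF uS uS]] SsubF by auto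
  have c_uf: "(u \<otimes>\<^bsub>PSL2\<^esub> f) \<otimes>\<^bsub>PSL2\<^esub> (u \<otimes>\<^bsub>PSL2\<^esub> f) \<otimes>\<^bsub>PSL2\<^esub> (u \<otimes>\<^bsub>PSL2\<^esub> f) = \<one>\<^bsub>PSL2\<^esub>"
    using pairc[OF fF iuF] uc by simp
  have c_uuf: "(u \<otimes>\<^bsub>PSL2\<^esub> u \<otimes>\<^bsub>PSL2\<^esub> f) \<otimes>\<^bsub>PSL2\<^esub> (u \<otimes>\<^bsub>PSL2\<^esub> u \<otimes>\<^bsub>PSL2\<^esub> f) \<otimes>\<^bsub>PSL2\<^esub> (u \<otimes>\<^bsub>PSL2\<^esub> u \<otimes>\<^bsub>PSL2\<^esub> f) = \<one>\<^bsub>PSL2\<^esub>"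
    using pairc[OF fF iuuF] uc by simp
  have c_u: "u \<otimes>\<^bsub>PSL2\<^esub> u \<otimes>\<^bsub>PSL2\<^esub> u = \<one>\<^bsub>PSL2\<^esub>"
    using fixc[OF uc v] uS S_iff by simp
  have n_f: "f \<noteq> \<one>\<^bsub>PSL2\<^esub>" using fS S1 by auto
  have n_uf: "u \<otimes>\<^bsub>PSL2\<^esub> f \<noteq> \<one>\<^bsub>PSL2\<^esub>"
  proof
    assume "u \<otimes>\<^bsub>PSL2\<^esub> f = \<one>\<^bsub>PSL2\<^esub>"
    then have "inv\<^bsub>PSL2\<^esub> f = u" using uc fc by (intro P.inv_equality) simp_all
    then have "f = inv\<^bsub>PSL2\<^esub> u" using fc by (metis P.inv_inv)
    then show False using fS Sinv[OF uS] by simp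
  qed
  have n_uuf: "u \<otimes>\<^bsub>PSL2\<^esub> u \<otimes>\<^bsub>PSL2\<^esub> f \<noteq> \<one>\<^bsub>PSL2\<^esub>"
  proof
    assume "u \<otimes>\<^bsub>PSL2\<^esub> u \<otimes>\<^bsub>PSL2\<^esub> f = \<one>\<^bsub>PSL2\<^esub>"
    then have "inv\<^bsub>PSL2\<^esub> f = u \<otimes>\<^bsub>PSL2\<^esub> u" using uc fc by (intro P.inv_equality) simp_all
    then have "f = inv\<^bsub>PSL2\<^esub> (u \<otimes>\<^bsub>PSL2\<^esub> u)" using fc by (metis P.inv_inv)
    then show False using fS Sinv[OF Smult[OF uS uS]] by simp
  qed
  obtain W :: "'a^2^2" where W: "det W = 1" and uW: "u = NN #>\<^bsub>SL2\<^esub> W" using uc carrier_PSL2 by auto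
  obtain X :: "'a^2^2" where X: "det X = 1" and fX: "f = NN #>\<^bsub>SL2\<^esub> X" using fc carrier_PSL2 by auto
  have ufWX: "u \<otimes>\<^bsub>PSL2\<^esub> f = NN #>\<^bsub>SL2\<^esub> (W ** X)" using uW fX W X by (simp add: mult_PSL2)
  have uufWX: "u \<otimes>\<^bsub>PSL2\<^esub> u \<otimes>\<^bsub>PSL2\<^esub> f = NN #>\<^bsub>SL2\<^esub> (W ** W ** X)"
    using uW fX W X by (simp add: mult_PSL2 det_mul)
  have d1: "det (W ** X) = 1" "det (W ** W ** X) = 1" using W X by (simp_all add: det_mul)
  have three: "(3::'a) \<noteq> 0" using three_nz assms(1,2,4) by blast
  show False
    using mat_contra[OF three W X psl_lift[OF W uW c_u u1] psl_lift[OF X fX c_f n_f]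
        psl_lift[OF d1(1) ufWX c_uf n_uf] psl_lift[OF d1(2) uufWX c_uuf n_uuf]] .
qed
end
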